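(* Let $(\Omega,\mathcal F,\mathbb P)$ be a probability space. For each $N\in\mathbb N$ let $\{t_j\}_{j\in\mathbb N}=\{t_j^{(N)}\}_{j\in\mathbb N}$ be a sequence of positive random variables on this space (the dependence on $N$ is suppressed in the notation) satisfying: (i) $\mathbb E(t_i)=\frac1N$ for all $i$ and all $N$; (ii) there exist $r>0$ and a constant $\tilde C>0$ such that $\mathbb E(t_i^{2+r})\le \frac{\tilde C}{N^{2+r}}$ for all $i$ and all $N$; (iii) for all $m\in\mathbb N$ (and all $N$), the vector $(t_1,\dots,t_m)$ is negatively superadditive dependent. Set $\tau_0=0$, $\tau_i=\sum_{j=1}^i t_j$ for $i\ge1$, and $N(1)=\sum_{j\ge1}\mathbf 1_{\tau_j\le 1}$. Let $W=(W_s)_{s\ge0}$ be a random function on the same probability space that is almost surely continuous, let $a\in\mathbb R$, and consider observations $$Y_{\tau_i}=a\tau_i+\varepsilon_{\tau_i},\qquad \varepsilon_{\tau_i}=W_{\tau_i}-W_{\tau_{i-1}},\qquad i=1,\dots,N(1),$$ with least square estimator $$\hat a_{N(1)}=\frac{\sum_{i=1}^{N(1)}Y_{\tau_i}\tau_i}{\sum_{i=1}^{N(1)}\tau_i^2}.$$ Then, almost surely as $N\to\infty$, $$N(1)\big(\hat a_{N(1)}-a\big)\to 3\int_0^1 (W_1-W_s)\,ds.$$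
   Context: A function $\phi:\mathbb R^m\to\mathbb R$ is superadditive if $\phi(x\vee y)+\phi(x\wedge y)\ge\phi(x)+\phi(y)$ for all $x,y\in\mathbb R^m$, where $\vee$ and $\wedge$ denote componentwise maximum and minimum. A random vector $(X_1,\dots,X_m)$ is negatively superadditive dependent (NSD) if for every superadditive $\phi$ such that the expectation $\mathbb E\phi(X_1,\dots,X_m)$ exists, $\mathbb E\phi(X_1,\dots,X_m)\le\mathbb E\phi(X_1^*,\dots,X_m^* )$, where $X_1^*,\dots,X_m^*$ are independent and $X_i^*$ has the same distribution as $X_i$ for each $i$. *)

theory Defs
  imports "HOL-Probability.Probability"
begin

text \<open>Vectors in R^m are represented as extensional functions on the index set {1..m}
  (elements of PiE {1..m} (\<lambda>_. UNIV)); componentwise max/min is sup/inf of functions.\<close>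

definition superadditive_on :: "nat \<Rightarrow> ((nat \<Rightarrow> real) \<Rightarrow> real) \<Rightarrow> bool" where
  "superadditive_on m \<phi> \<longleftrightarrow>
     (\<forall>x\<in>PiE {1..m} (\<lambda>_. UNIV). \<forall>y\<in>PiE {1..m} (\<lambda>_. UNIV).
        \<phi> (sup x y) + \<phi> (inf x y) \<ge> \<phi> x + \<phi> y)"

text \<open>Negative superadditive dependence of (X 1, ..., X m) on the probability space M.
  The independent copy (X*_1,...,X*_m) is realised by the product of the marginal laws.\<close>
definition NSD :: "'a measure \<Rightarrow> nat \<Rightarrow> (nat \<Rightarrow> 'a \<Rightarrow> real) \<Rightarrow> bool" where
  "NSD M m X \<longleftrightarrow>
     (\<forall>\<phi>. superadditive_on m \<phi>
        \<and> \<phi> \<in> borel_measurable (PiM {1..m} (\<lambda>_. borel))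
        \<and> integrable M (\<lambda>\<omega>. \<phi> (\<lambda>i\<in>{1..m}. X i \<omega>))
        \<and> integrable (PiM {1..m} (\<lambda>i. distr M borel (X i))) \<phi>
      \<longrightarrow> (\<integral>\<omega>. \<phi> (\<lambda>i\<in>{1..m}. X i \<omega>) \<partial>M)
            \<le> (\<integral>x. \<phi> x \<partial>(PiM {1..m} (\<lambda>i. distr M borel (X i)))))"

end

theory Submission
  imports Defs
begin


lemma sum_sq_formula: "(\<Sum>i\<in>{1..n}. (real i)^2) = real n * (real n + 1) * (2 * real n + 1) / 6"
proof (induction n)
  case 0 then show ?case by simp
next
  case (Suc n)
  have "{1..Suc n} = insert (Suc n) {1..n}" by auto
  then have "(\<Sum>i\<in>{1..Suc n}. (real i)^2) = (real (Suc n))^2 + (\<Sum>i\<in>{1..n}. (real i)^2)" by simp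
  then show ?case using Suc by (simp add: field_simps power2_eq_square)
qed

lemma sum_by_parts:
  fixes f g :: "nat \<Rightarrow> real"
  shows "(\<Sum>i\<in>{1..n}. (f i - f (i - 1)) * g i) = f n * g n - f 0 * g 0 - (\<Sum>i\<in>{1..n}. f (i - 1) * (g i - g (i - 1)))"
proof (induction n)
  case 0 then show ?case by simp
next
  case (Suc n)
  have "{1..Suc n} = insert (Suc n) {1..n}" by auto
  then show ?case using Suc by (simp add: algebra_simps)
qed

lemma sum_telescope1:
  fixes f :: "nat \<Rightarrow> real"
  shows "(\<Sum>i\<in>{1..n}. (f i - f (i - 1))) = f n - f 0"
proof (induction n)
  case 0 then show ?case by simp
next
  case (Suc n)
  have "{1..Suc n} = insert (Suc n) {1..n}" by auto
  then show ?case using Suc by (simp add: algebra_simps)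
qed

lemma downset_card:
  fixes \<tau> :: "nat \<Rightarrow> real"
  assumes mono: "\<And>i j. i \<le> j \<Longrightarrow> \<tau> i \<le> \<tau> j" and k: "\<tau> k > 1" and k1: "1 \<le> k"
  shows "\<exists>p. {j. 1 \<le> j \<and> \<tau> j \<le> 1} = {1..p} \<and> p < k"
proof -
  define S where "S = {j. 1 \<le> j \<and> \<tau> j \<le> 1}"
  have Sk: "S \<subseteq> {..<k}"
  proof
    fix j assume "j \<in> S"
    then have "\<tau> j \<le> 1" by (simp add: S_def)
    then show "j \<in> {..<k}" using mono[of k j] k by (cases "k \<le> j") auto
  qed
  then have fin: "finite S" using finite_subset by blast
  define p where "p = Max (insert 0 S)"
  have "S = {1..p}"
  proof
    show "S \<subseteq> {1..p}" using fin unfolding p_def by (auto simp: S_def)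
    show "{1..p} \<subseteq> S"
    proof
      fix j assume j: "j \<in> {1..p}"
      then have "p \<noteq> 0" by auto
      then have "p \<in> S" using Max_in[of "insert 0 S"] fin unfolding p_def by auto
      then show "j \<in> S" using j mono[of j p] by (auto simp: S_def)
    qed
  qed
  moreover have "p < k"
  proof (cases "p = 0")
    case True then show ?thesis using k1 by simp
  next
    case False
    then have "p \<in> S" using Max_in[of "insert 0 S"] fin unfolding p_def by auto
    then show ?thesis using Sk by auto
  qed
  ultimately show ?thesis unfolding S_def by auto
qed

lemma tendsto_by_bound:
  fixes f g :: "nat \<Rightarrow> real"
  assumes "eventually (\<lambda>N. \<bar>f N - l\<bar> \<le> g N) sequentially" and "g \<longlonglongrightarrow> 0"
  shows "f \<longlonglongrightarrow> l"
proof -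
  have "(\<lambda>N. f N - l) \<longlonglongrightarrow> 0"
    by (rule Lim_null_comparison[OF _ assms(2)]) (use assms(1) in auto)
  then show ?thesis by (simp add: LIM_zero_iff)
qed

lemma det_limit:
  fixes tt :: "nat \<Rightarrow> nat \<Rightarrow> real" and w :: "real \<Rightarrow> real" and \<delta> :: "nat \<Rightarrow> real" and a :: real
  assumes pos: "\<And>N j. N \<ge> 1 \<Longrightarrow> j \<ge> 1 \<Longrightarrow> tt N j > 0"
    and cont: "continuous_on {0..} w"
    and \<delta>0: "\<delta> \<longlonglongrightarrow> 0"
    and ev: "eventually (\<lambda>N. (\<forall>j\<in>{1..2*N}. tt N j \<le> \<delta> N) \<and>
              (\<forall>m\<in>{1..2*N}. \<bar>(\<Sum>j\<in>{1..m}. tt N j) - real m / real N\<bar> < \<delta> N)) sequentially"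
  shows "(\<lambda>N. let \<tau> = (\<lambda>i. \<Sum>j\<in>{1..i}. tt N j);
             n = card {j. j \<ge> 1 \<and> \<tau> j \<le> 1};
             Y = (\<lambda>i. a * \<tau> i + (w (\<tau> i) - w (\<tau> (i - 1))));
             ahat = (\<Sum>i\<in>{1..n}. Y i * \<tau> i) / (\<Sum>i\<in>{1..n}. (\<tau> i)\<^sup>2)
         in real n * (ahat - a))
    \<longlonglongrightarrow> 3 * integral {0..1} (\<lambda>s. w 1 - w s)"
proof -
  define \<tau> where "\<tau> N i = (\<Sum>j\<in>{1..i}. tt N j)" for N i
  define n where "n N = card {j. 1 \<le> j \<and> \<tau> N j \<le> 1}" for N
  define S2 where "S2 N = (\<Sum>i\<in>{1..n N}. (\<tau> N i)\<^sup>2)" for N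
  define E where "E N = (\<Sum>i\<in>{1..n N}. (w (\<tau> N i) - w (\<tau> N (i - 1))) * \<tau> N i)" for N
  define F where "F x = integral {0..x} w" for x
  define G where "G N \<longleftrightarrow> (N \<ge> 4 \<and> \<delta> N < 1/4 \<and> (\<forall>j\<in>{1..2*N}. tt N j \<le> \<delta> N) \<and>
              (\<forall>m\<in>{1..2*N}. \<bar>\<tau> N m - real m / real N\<bar> < \<delta> N))" for N
  have "eventually (\<lambda>N. \<delta> N < 1/4) sequentially"
    using order_tendstoD(2)[OF \<delta>0, of "1/4"] by simp
  then have evG: "eventually G sequentially"
    using ev eventually_ge_at_top[of 4] unfolding G_def \<tau>_def
    by eventually_elim (simp add: G_def \<tau>_def)
  have \<tau>0: "\<tau> N 0 = 0" for N by (simp add: \<tau>_def)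
  have \<tau>Suc: "\<tau> N i = \<tau> N (i - 1) + tt N i" if "i \<ge> 1" for N i
  proof -
    have "{1..i} = insert i {1..i-1}" "i \<notin> {1..i-1}" using that by auto
    then show ?thesis unfolding \<tau>_def by (simp add: add.commute)
  qed
  have \<tau>mono: "\<tau> N i \<le> \<tau> N j" if "N \<ge> 1" "i \<le> j" for N i j
    unfolding \<tau>_def using that pos by (intro sum_mono2) (auto simp: less_imp_le)
  have \<tau>nn: "0 \<le> \<tau> N i" if "N \<ge> 1" for N i
    using \<tau>mono[OF that, of 0 i] \<tau>0 by simp
  have key: "1 \<le> n N \<and> n N < 2*N \<and> \<tau> N (n N) \<le> 1 \<and> 1 - \<delta> N \<le> \<tau> N (n N) \<and>
             \<bar>real (n N) / N - 1\<bar> \<le> \<delta> N + 1 / N \<and> (\<forall>i\<in>{1..n N}. 0 \<le> \<tau> N i \<and> \<tau> N i \<le> 1)"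
    if G: "G N" for N
  proof -
    from G have N4: "N \<ge> 4" and d4: "\<delta> N < 1/4" and tb: "\<forall>j\<in>{1..2*N}. tt N j \<le> \<delta> N"
      and cl: "\<forall>m\<in>{1..2*N}. \<bar>\<tau> N m - real m / real N\<bar> < \<delta> N" by (auto simp: G_def)
    have N1: "N \<ge> 1" using N4 by simp
    have "\<bar>\<tau> N (2*N) - real (2*N) / real N\<bar> < \<delta> N" using N4 by (intro bspec[OF cl]) auto
    moreover have "real (2*N) / real N = 2" using N4 by simp
    ultimately have t2N: "\<tau> N (2*N) > 1" using d4 by linarith
    obtain p where p: "{j. 1 \<le> j \<and> \<tau> N j \<le> 1} = {1..p}" and p2: "p < 2*N"
      using downset_card[of "\<tau> N" "2*N"] \<tau>mono[OF N1] t2N N4 by auto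
    have np: "n N = p" unfolding n_def p by simp
    have "\<tau> N 1 = tt N 1" using \<tau>Suc[of 1 N] \<tau>0 by simp
    also have "\<dots> \<le> \<delta> N" using N4 by (intro bspec[OF tb]) auto
    finally have "\<tau> N 1 \<le> 1" using d4 by linarith
    then have "1 \<in> {j. 1 \<le> j \<and> \<tau> N j \<le> 1}" by simp
    then have p1: "1 \<le> p" unfolding p by simp
    have "p \<in> {1..p}" using p1 by simp
    then have tp: "\<tau> N p \<le> 1" unfolding p[symmetric] by simp
    have "Suc p \<notin> {1..p}" by simp
    then have tp1: "\<tau> N (Suc p) > 1" unfolding p[symmetric] by simp
    have "\<tau> N (Suc p) = \<tau> N p + tt N (Suc p)" using \<tau>Suc[of "Suc p" N] by simp
    moreover have "tt N (Suc p) \<le> \<delta> N" using p2 by (intro bspec[OF tb]) auto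
    ultimately have tp2: "1 - \<delta> N \<le> \<tau> N p" using tp1 by linarith
    have c1: "\<bar>\<tau> N p - real p / real N\<bar> < \<delta> N" using p1 p2 by (intro bspec[OF cl]) auto
    have c2: "\<bar>\<tau> N (Suc p) - real (Suc p) / real N\<bar> < \<delta> N" using p2 by (intro bspec[OF cl]) auto
    have "real (Suc p) / real N = real p / real N + 1 / N" by (simp add: add_divide_distrib)
    then have c3: "\<bar>\<tau> N (Suc p) - (real p / real N + 1 / N)\<bar> < \<delta> N" using c2 by simp
    have "\<bar>real p / N - 1\<bar> \<le> \<delta> N + 1 / N" using c1 c3 tp tp1 unfolding abs_less_iff abs_le_iff by (smt (verit) divide_nonneg_nonneg of_nat_0_le_iff zero_le_one)
    moreover have "\<forall>i\<in>{1..p}. 0 \<le> \<tau> N i \<and> \<tau> N i \<le> 1"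
    proof
      fix i assume "i \<in> {1..p}"
      then have "\<tau> N i \<le> \<tau> N p" using \<tau>mono[OF N1] by simp
      then show "0 \<le> \<tau> N i \<and> \<tau> N i \<le> 1" using \<tau>nn[OF N1, of i] tp by simp
    qed
    ultimately show ?thesis using np p1 p2 tp tp2 by simp
  qed
  have inv0: "(\<lambda>N. 1 / real N) \<longlonglongrightarrow> 0" using lim_const_over_n[of 1] by simp
  have L1: "(\<lambda>N. real (n N) / N) \<longlonglongrightarrow> 1"
  proof (rule tendsto_by_bound)
    show "eventually (\<lambda>N. \<bar>real (n N) / N - 1\<bar> \<le> \<delta> N + 1 / N) sequentially"
      using evG by eventually_elim (use key in blast)
    show "(\<lambda>N. \<delta> N + 1 / real N) \<longlonglongrightarrow> 0" using tendsto_add[OF \<delta>0 inv0] by simp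
  qed
  have L2: "(\<lambda>N. \<tau> N (n N)) \<longlonglongrightarrow> 1"
  proof (rule tendsto_by_bound)
    show "eventually (\<lambda>N. \<bar>\<tau> N (n N) - 1\<bar> \<le> \<delta> N) sequentially"
      using evG by eventually_elim (use key in force)
  qed (rule \<delta>0)
  define Q where "Q N = (1/6) * (real (n N) / N) * (real (n N) / N + 1 / N) * (2 * (real (n N) / N) + 1 / N)" for N
  have Qlim: "Q \<longlonglongrightarrow> 1/3"
  proof -
    have "Q \<longlonglongrightarrow> (1/6) * 1 * (1 + 0) * (2 * 1 + 0)"
      unfolding Q_def by (intro tendsto_intros L1 inv0)
    then show ?thesis by simp
  qed
  have Qeq: "Q N = (\<Sum>i\<in>{1..n N}. (real i / N)\<^sup>2) / N" if "N \<ge> 1" for N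
  proof -
    have "(\<Sum>i\<in>{1..n N}. (real i / N)\<^sup>2) = (\<Sum>i\<in>{1..n N}. (real i)\<^sup>2) / (real N)^2"
      by (simp add: power_divide sum_divide_distrib)
    also have "\<dots> = real (n N) * (real (n N) + 1) * (2 * real (n N) + 1) / 6 / (real N)^2"
      by (simp only: sum_sq_formula)
    finally show ?thesis using that unfolding Q_def by (simp add: field_simps power2_eq_square power3_eq_cube)
  qed
  have L3: "(\<lambda>N. S2 N / N) \<longlonglongrightarrow> 1/3"
  proof -
    have "(\<lambda>N. S2 N / N - Q N) \<longlonglongrightarrow> 0"
    proof (rule Lim_null_comparison)
      show "(\<lambda>N. 6 * \<delta> N) \<longlonglongrightarrow> 0" using tendsto_mult_right_zero[OF \<delta>0, of 6] by simp
      show "eventually (\<lambda>N. norm (S2 N / N - Q N) \<le> 6 * \<delta> N) sequentially"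
        using evG
      proof eventually_elim
        case (elim N)
        note k = key[OF elim]
        from elim have N4: "N \<ge> 4" and cl: "\<forall>m\<in>{1..2*N}. \<bar>\<tau> N m - real m / real N\<bar> < \<delta> N"
          by (auto simp: G_def)
        have "\<bar>S2 N - (\<Sum>i\<in>{1..n N}. (real i / N)\<^sup>2)\<bar> = \<bar>\<Sum>i\<in>{1..n N}. ((\<tau> N i)\<^sup>2 - (real i / N)\<^sup>2)\<bar>"
          unfolding S2_def by (simp add: sum_subtractf)
        also have "\<dots> \<le> (\<Sum>i\<in>{1..n N}. \<bar>(\<tau> N i)\<^sup>2 - (real i / N)\<^sup>2\<bar>)" by (rule sum_abs)
        also have "\<dots> \<le> (\<Sum>i\<in>{1..n N}. 3 * \<delta> N)"
        proof (rule sum_mono)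
          fix i assume i: "i \<in> {1..n N}"
          have a1: "\<bar>\<tau> N i - real i / N\<bar> \<le> \<delta> N" using cl i k by (auto intro: less_imp_le)
          have "real i \<le> real (n N)" using i by simp
          then have "real i / N \<le> real (n N) / N" by (simp add: divide_right_mono)
          moreover have "real (n N) / N \<le> 2" using k N4 by (simp add: divide_le_eq)
          ultimately have "0 \<le> real i / N" "real i / N \<le> 2" by auto
          moreover have "0 \<le> \<tau> N i \<and> \<tau> N i \<le> 1" using k i by blast
          ultimately have a2: "\<bar>\<tau> N i + real i / N\<bar> \<le> 3" by linarith
          have "\<bar>(\<tau> N i)\<^sup>2 - (real i / N)\<^sup>2\<bar> = \<bar>\<tau> N i - real i / N\<bar> * \<bar>\<tau> N i + real i / N\<bar>"
            by (simp add: power2_eq_square abs_mult[symmetric] algebra_simps)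
          also have "\<dots> \<le> \<delta> N * 3" using a1 a2 by (intro mult_mono) auto
          finally show "\<bar>(\<tau> N i)\<^sup>2 - (real i / N)\<^sup>2\<bar> \<le> 3 * \<delta> N" by simp
        qed
        also have "\<dots> = real (n N) * (3 * \<delta> N)" by simp
        finally have b: "\<bar>S2 N - (\<Sum>i\<in>{1..n N}. (real i / N)\<^sup>2)\<bar> \<le> real (n N) * (3 * \<delta> N)" .
        have "norm (S2 N / N - Q N) = \<bar>S2 N - (\<Sum>i\<in>{1..n N}. (real i / N)\<^sup>2)\<bar> / N"
          using Qeq[of N] N4 by (simp add: diff_divide_distrib[symmetric])
        also have "\<dots> \<le> real (n N) * (3 * \<delta> N) / N" using b by (simp add: divide_right_mono)
        also have "\<dots> = (real (n N) / N) * (3 * \<delta> N)" by simp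
        also have "\<dots> \<le> 2 * (3 * \<delta> N)"
        proof (rule mult_right_mono)
          show "real (n N) / N \<le> 2" using k N4 by (simp add: divide_le_eq)
          have "\<bar>\<tau> N 1 - real 1 / N\<bar> < \<delta> N" using N4 by (intro bspec[OF cl]) auto
          then have "0 \<le> \<delta> N" by linarith
          then show "0 \<le> 3 * \<delta> N" by simp
        qed
        finally show ?case by simp
      qed
    qed
    from tendsto_add[OF this Qlim] show ?thesis by simp
  qed
  have cont01: "continuous_on {0..1} w" by (rule continuous_on_subset[OF cont]) auto
  have wint: "w integrable_on {0..x}" if "x \<le> 1" for x
    by (rule integrable_continuous_real, rule continuous_on_subset[OF cont01]) (use that in auto)
  have Fcont: "continuous_on {0..1} F" unfolding F_def
    by (rule indefinite_integral_continuous_1) (rule integrable_continuous_real[OF cont01])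
  have step: "\<bar>F v - F u - w u * (v - u)\<bar> \<le> e * (v - u)"
    if uv: "0 \<le> u" "u \<le> v" "v \<le> 1" and we: "\<forall>s\<in>{u..v}. \<bar>w s - w u\<bar> \<le> e" for u v e
  proof -
    have cuv: "continuous_on {u..v} w" by (rule continuous_on_subset[OF cont01]) (use uv in auto)
    have wuv: "w integrable_on {u..v}" by (rule integrable_continuous_real[OF cuv])
    have "integral {0..u} w + integral {u..v} w = integral {0..v} w"
      by (rule Henstock_Kurzweil_Integration.integral_combine) (use uv wint[of v] in simp_all)
    then have "F v - F u = integral {u..v} w" unfolding F_def by simp
    also have "\<dots> = integral {u..v} (\<lambda>s. w s - w u) + w u * (v - u)"
      using integral_diff[OF wuv integrable_const_ivl[of "w u" u v]] uv by simp
    finally have "F v - F u - w u * (v - u) = integral {u..v} (\<lambda>s. w s - w u)" by simp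
    also have "\<bar>\<dots>\<bar> \<le> e * (v - u)"
    proof -
      have "continuous_on {u..v} (\<lambda>s. w s - w u)" using cuv by (intro continuous_intros)
      then have "norm (integral {u..v} (\<lambda>s. w s - w u)) \<le> e * (v - u)"
        by (rule integral_bound[OF uv(2)]) (use we in simp)
      then show ?thesis by simp
    qed
    finally show ?thesis .
  qed
  define R where "R N = (\<Sum>i\<in>{1..n N}. w (\<tau> N (i - 1)) * (\<tau> N i - \<tau> N (i - 1)))" for N
  have L4a: "(\<lambda>N. R N - F (\<tau> N (n N))) \<longlonglongrightarrow> 0"
  proof (rule tendstoI)
    fix e :: real assume e: "0 < e"
    have uc: "uniformly_continuous_on {0..1} w"
      using compact_uniformly_continuous[OF cont01] by simp
    have "\<exists>d>0. \<forall>x\<in>{0..1}. \<forall>x'\<in>{0..1}. dist x' x < d \<longrightarrow> dist (w x') (w x) < e/2"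
      using uc[unfolded uniformly_continuous_on_def, rule_format, of "e/2"] e by simp
    then obtain d where d: "d > 0" and dd0: "\<forall>x\<in>{0..1}. \<forall>x'\<in>{0..1}. dist x' x < d \<longrightarrow> dist (w x') (w x) < e/2"
      by blast
    have dd: "dist (w x') (w x) < e/2" if "x \<in> {0..1}" "x' \<in> {0..1}" "dist x' x < d" for x x'
      using dd0 that by blast
    have "eventually (\<lambda>N. \<delta> N < d) sequentially" using order_tendstoD(2)[OF \<delta>0 d] .
    then show "eventually (\<lambda>N. dist (R N - F (\<tau> N (n N))) 0 < e) sequentially"
      using evG
    proof eventually_elim
      case (elim N)
      note k = key[OF elim(2)]
      from elim have N4: "N \<ge> 4" and tb: "\<forall>j\<in>{1..2*N}. tt N j \<le> \<delta> N" by (auto simp: G_def)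
      have N1: "N \<ge> 1" using N4 by simp
      have F0: "F (\<tau> N 0) = 0" unfolding F_def \<tau>0 by simp
      have "F (\<tau> N (n N)) = (\<Sum>i\<in>{1..n N}. (F (\<tau> N i) - F (\<tau> N (i - 1))))"
        using sum_telescope1[of "\<lambda>i. F (\<tau> N i)" "n N"] F0 by simp
      then have eq: "R N - F (\<tau> N (n N)) = (\<Sum>i\<in>{1..n N}. w (\<tau> N (i - 1)) * (\<tau> N i - \<tau> N (i - 1)) - (F (\<tau> N i) - F (\<tau> N (i - 1))))"
        unfolding R_def by (simp add: sum_subtractf)
      have s1: "\<bar>\<Sum>i\<in>{1..n N}. w (\<tau> N (i - 1)) * (\<tau> N i - \<tau> N (i - 1)) - (F (\<tau> N i) - F (\<tau> N (i - 1)))\<bar> \<le> (\<Sum>i\<in>{1..n N}. \<bar>w (\<tau> N (i - 1)) * (\<tau> N i - \<tau> N (i - 1)) - (F (\<tau> N i) - F (\<tau> N (i - 1)))\<bar>)"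
        by (rule sum_abs)
      have s2: "(\<Sum>i\<in>{1..n N}. \<bar>w (\<tau> N (i - 1)) * (\<tau> N i - \<tau> N (i - 1)) - (F (\<tau> N i) - F (\<tau> N (i - 1)))\<bar>) \<le> (\<Sum>i\<in>{1..n N}. e/2 * (\<tau> N i - \<tau> N (i - 1)))"
      proof (rule sum_mono)
        fix i assume i: "i \<in> {1..n N}"
        define u where "u = \<tau> N (i - 1)"
        define v where "v = \<tau> N i"
        have u0: "0 \<le> u" unfolding u_def by (rule \<tau>nn[OF N1])
        have uv: "u \<le> v" unfolding u_def v_def by (rule \<tau>mono[OF N1]) simp
        have v1: "v \<le> 1" unfolding v_def using k i by blast
        have "v - u = tt N i" unfolding u_def v_def using \<tau>Suc[of i N] i by simp
        also have "\<dots> \<le> \<delta> N" using i k by (intro bspec[OF tb]) auto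
        finally have vu: "v - u < d" using elim(1) by simp
        have "\<forall>s\<in>{u..v}. \<bar>w s - w u\<bar> \<le> e/2"
        proof
          fix s assume s: "s \<in> {u..v}"
          have "dist (w s) (w u) < e/2"
            using s u0 v1 vu by (intro dd) (auto simp: dist_real_def)
          then show "\<bar>w s - w u\<bar> \<le> e/2" by (simp add: dist_real_def)
        qed
        from step[OF u0 uv v1 this] have "\<bar>F v - F u - w u * (v - u)\<bar> \<le> e / 2 * (v - u)" .
        then have "\<bar>w u * (v - u) - (F v - F u)\<bar> \<le> e / 2 * (v - u)" by linarith
        then show "\<bar>w (\<tau> N (i - 1)) * (\<tau> N i - \<tau> N (i - 1)) - (F (\<tau> N i) - F (\<tau> N (i - 1)))\<bar> \<le> e/2 * (\<tau> N i - \<tau> N (i - 1))"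
          unfolding u_def v_def .
      qed
      have s3: "(\<Sum>i\<in>{1..n N}. e/2 * (\<tau> N i - \<tau> N (i - 1))) = e/2 * (\<tau> N (n N) - \<tau> N 0)"
        by (simp only: sum_distrib_left[symmetric] sum_telescope1)
      have s4: "e/2 * (\<tau> N (n N) - \<tau> N 0) \<le> e/2" using k \<tau>0 e by simp
      have "\<bar>R N - F (\<tau> N (n N))\<bar> \<le> e/2" unfolding eq using s1 s2 s3 s4 by linarith
      then show ?case using e by (simp add: dist_real_def)
    qed
  qed
  have evI: "eventually (\<lambda>N. \<tau> N (n N) \<in> {0..1}) sequentially"
    using evG by eventually_elim (use key in force)
  have L4b: "(\<lambda>N. F (\<tau> N (n N))) \<longlonglongrightarrow> F 1"
    by (rule continuous_on_tendsto_compose[OF Fcont L2]) (use evI in auto)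
  have L4c: "(\<lambda>N. w (\<tau> N (n N))) \<longlonglongrightarrow> w 1"
    by (rule continuous_on_tendsto_compose[OF cont01 L2]) (use evI in auto)
  have Eeq: "E N = w (\<tau> N (n N)) * \<tau> N (n N) - F (\<tau> N (n N)) - (R N - F (\<tau> N (n N)))" for N
    unfolding E_def R_def using sum_by_parts[of "\<lambda>i. w (\<tau> N i)" "\<tau> N" "n N"] \<tau>0 by simp
  have L4: "E \<longlonglongrightarrow> w 1 * 1 - F 1 - 0"
    unfolding Eeq by (intro tendsto_intros L4a L4b L4c L2)
  have lim: "(\<lambda>N. (real (n N) / N) * E N / (S2 N / N)) \<longlonglongrightarrow> 1 * (w 1 * 1 - F 1 - 0) / (1/3)"
    by (intro tendsto_intros L1 L4 L3) simp
  have target: "3 * integral {0..1} (\<lambda>s. w 1 - w s) = 1 * (w 1 * 1 - F 1 - 0) / (1/3)"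
    using integral_diff[OF integrable_const_ivl[of "w 1" 0 1] wint[of 1]] unfolding F_def by simp
  have eqv: "eventually (\<lambda>N. (real (n N) / N) * E N / (S2 N / N) =
     (let \<tau> = (\<lambda>i. \<Sum>j\<in>{1..i}. tt N j);
             n = card {j. j \<ge> 1 \<and> \<tau> j \<le> 1};
             Y = (\<lambda>i. a * \<tau> i + (w (\<tau> i) - w (\<tau> (i - 1))));
             ahat = (\<Sum>i\<in>{1..n}. Y i * \<tau> i) / (\<Sum>i\<in>{1..n}. (\<tau> i)\<^sup>2)
         in real n * (ahat - a))) sequentially"
    using evG
  proof eventually_elim
    case (elim N)
    note k = key[OF elim]
    have N1: "N \<ge> 1" using elim by (simp add: G_def)
    have tf: "(\<lambda>i. \<Sum>j\<in>{1..i}. tt N j) = \<tau> N" by (simp add: \<tau>_def fun_eq_iff)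
    have S2pos: "S2 N > 0" unfolding S2_def
    proof (rule sum_pos2[of _ 1])
      show "0 < (\<tau> N 1)\<^sup>2" using \<tau>Suc[of 1 N] \<tau>0 pos[OF N1, of 1] by simp
    qed (use k in auto)
    have sY: "(\<Sum>i\<in>{1..n N}. (a * \<tau> N i + (w (\<tau> N i) - w (\<tau> N (i - 1)))) * \<tau> N i) = a * S2 N + E N"
      unfolding S2_def E_def by (simp add: distrib_right sum.distrib sum_distrib_left power2_eq_square mult.assoc)
    have "(let \<tau> = (\<lambda>i. \<Sum>j\<in>{1..i}. tt N j);
             n = card {j. j \<ge> 1 \<and> \<tau> j \<le> 1};
             Y = (\<lambda>i. a * \<tau> i + (w (\<tau> i) - w (\<tau> (i - 1))));
             ahat = (\<Sum>i\<in>{1..n}. Y i * \<tau> i) / (\<Sum>i\<in>{1..n}. (\<tau> i)\<^sup>2)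
         in real n * (ahat - a)) = real (n N) * ((a * S2 N + E N) / S2 N - a)"
      unfolding Let_def tf n_def[symmetric] sY[symmetric] S2_def[symmetric] ..
    also have "\<dots> = (real (n N) / N) * E N / (S2 N / N)"
      using S2pos N1 by (simp add: field_simps)
    finally show ?case by simp
  qed
  show ?thesis using Lim_transform_eventually[OF lim eqv] target by simp
qed



lemma convex_pair:
  fixes f :: "real \<Rightarrow> real"
  assumes cf: "convex_on UNIV f" and aA: "a \<le> A" and bA: "b \<le> A" and s: "A + B = a + b"
  shows "f a + f b \<le> f A + f B"
proof (cases "A = B")
  case True
  then have "a = A" "b = A" using aA bA s by linarith+
  then show ?thesis using True by simp
next
  case False
  then have AB: "B < A" using aA bA s by linarith
  define \<theta> where "\<theta> = (a - B) / (A - B)"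
  have t0: "0 \<le> \<theta>" unfolding \<theta>_def using AB s bA by (intro divide_nonneg_pos) linarith+
  have t1: "\<theta> \<le> 1" unfolding \<theta>_def using AB aA by (simp add: divide_le_eq)
  have h: "\<theta> * (A - B) = a - B" unfolding \<theta>_def using AB by simp
  have ea: "a = (1 - \<theta>) * B + \<theta> * A" using h unfolding left_diff_distrib right_diff_distrib by linarith
  have eb: "b = (1 - \<theta>) * A + \<theta> * B" using h s unfolding left_diff_distrib right_diff_distrib by linarith
  have "f a \<le> (1 - \<theta>) * f B + \<theta> * f A"
    using convex_onD[OF cf t0 t1, of B A] ea by simp
  moreover have "f b \<le> (1 - \<theta>) * f A + \<theta> * f B"
    using convex_onD[OF cf t0 t1, of A B] eb by simp
  ultimately show ?thesis by (simp add: algebra_simps)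
qed

lemma convex_exp_lin: "convex_on UNIV (\<lambda>s::real. exp (l * s))"
proof (rule convex_onI)
  fix t x y :: real assume t: "0 < t" "t < 1"
  have "exp (l * ((1 - t) *\<^sub>R x + t *\<^sub>R y)) = exp ((1 - t) *\<^sub>R (l * x) + t *\<^sub>R (l * y))"
    by (simp add: algebra_simps)
  also have "\<dots> \<le> (1 - t) * exp (l * x) + t * exp (l * y)"
    using convex_onD[OF exp_convex, of t "l * x" "l * y"] t by simp
  finally show "exp (l * ((1 - t) *\<^sub>R x + t *\<^sub>R y)) \<le> (1 - t) * exp (l * x) + t * exp (l * y)" .
qed (rule convex_UNIV)

lemma superadd_exp_sum:
  fixes g :: "real \<Rightarrow> real"
  assumes g: "mono g"
  shows "superadditive_on m (\<lambda>x. exp (l * (\<Sum>i\<in>{1..m}. g (x i))))"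
  unfolding superadditive_on_def
proof (intro ballI)
  fix x y :: "nat \<Rightarrow> real"
  have gi: "g (max p q) + g (min p q) = g p + g q" for p q
    by (cases "p \<le> q") (auto simp: max_def min_def)
  define A where "A = (\<Sum>i\<in>{1..m}. g (sup x y i))"
  define B where "B = (\<Sum>i\<in>{1..m}. g (inf x y i))"
  define a where "a = (\<Sum>i\<in>{1..m}. g (x i))"
  define b where "b = (\<Sum>i\<in>{1..m}. g (y i))"
  have s: "A + B = a + b"
    unfolding A_def B_def a_def b_def sum.distrib[symmetric]
    by (rule sum.cong) (auto simp: sup_max inf_min gi)
  have aA: "a \<le> A" unfolding A_def a_def
    by (rule sum_mono) (auto simp: sup_max intro!: monoD[OF g])
  have bA: "b \<le> A" unfolding A_def b_def
    by (rule sum_mono) (auto simp: sup_max intro!: monoD[OF g])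
  from convex_pair[OF convex_exp_lin aA bA s]
  show "exp (l * (\<Sum>i\<in>{1..m}. g (x i))) + exp (l * (\<Sum>i\<in>{1..m}. g (y i)))
        \<le> exp (l * (\<Sum>i\<in>{1..m}. g (sup x y i))) + exp (l * (\<Sum>i\<in>{1..m}. g (inf x y i)))"
    unfolding A_def B_def a_def b_def .
qed

lemma nsd_mgf:
  fixes M :: "'a measure" and X :: "nat \<Rightarrow> 'a \<Rightarrow> real" and g :: "real \<Rightarrow> real"
  assumes P: "prob_space M" and nsd: "NSD M m X"
    and Xm: "\<And>i. i \<in> {1..m} \<Longrightarrow> X i \<in> borel_measurable M"
    and g: "mono g" and gm: "g \<in> borel_measurable borel" and lg: "\<And>x. l * g x \<le> 1"
  shows "(\<integral>\<omega>. exp (l * (\<Sum>i\<in>{1..m}. g (X i \<omega>))) \<partial>M) \<le> (\<Prod>i\<in>{1..m}. \<integral>\<omega>. exp (l * g (X i \<omega>)) \<partial>M)"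
proof -
  interpret prob_space M by (rule P)
  note gm[measurable]
  define \<phi> where "\<phi> x = exp (l * (\<Sum>i\<in>{1..m}. g (x i)))" for x :: "nat \<Rightarrow> real"
  define MM where "MM i = (if i \<in> {1..m} then distr M borel (X i) else distr M borel (\<lambda>_. 0::real))" for i
  have MMp: "prob_space (MM i)" for i unfolding MM_def using Xm by (auto intro!: prob_space_distr prob_space_return)
  have PiEq: "PiM {1..m} (\<lambda>i. distr M borel (X i)) = PiM {1..m} MM"
    by (rule PiM_cong) (auto simp: MM_def)
  interpret PS: product_sigma_finite MM
    unfolding product_sigma_finite_def using MMp by (auto intro: prob_space_imp_sigma_finite)
  interpret PP: prob_space "PiM {1..m} MM" by (rule prob_space_PiM) (rule MMp)
  have setsMM: "sets (PiM {1..m} (\<lambda>_. borel)) = sets (PiM {1..m} MM)"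
    by (rule sets_PiM_cong) (auto simp: MM_def)
  have phim: "\<phi> \<in> borel_measurable (PiM {1..m} (\<lambda>_. borel))" unfolding \<phi>_def by measurable
  then have phim': "\<phi> \<in> borel_measurable (PiM {1..m} MM)"
    using measurable_cong_sets[OF setsMM refl, of borel] by metis
  have lsum: "l * (\<Sum>i\<in>{1..m}. g (x i)) \<le> real m" for x :: "nat \<Rightarrow> real"
  proof -
    have "l * (\<Sum>i\<in>{1..m}. g (x i)) = (\<Sum>i\<in>{1..m}. l * g (x i))" by (simp add: sum_distrib_left)
    also have "\<dots> \<le> (\<Sum>i\<in>{1..m}. 1)" by (rule sum_mono) (rule lg)
    finally show ?thesis by simp
  qed
  have phib: "norm (\<phi> x) \<le> exp (real m)" for x unfolding \<phi>_def using lsum[of x] by simp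
  have intP: "integrable (PiM {1..m} MM) \<phi>"
    by (rule PP.integrable_const_bound[where B="exp (real m)"]) (use phib phim' in auto)
  have lhs: "(\<lambda>\<omega>. \<phi> (\<lambda>i\<in>{1..m}. X i \<omega>)) = (\<lambda>\<omega>. exp (l * (\<Sum>i\<in>{1..m}. g (X i \<omega>))))"
    unfolding \<phi>_def by (intro ext arg_cong[where f=exp] arg_cong[where f="\<lambda>z. l * z"] sum.cong) auto
  have lhsm: "(\<lambda>\<omega>. exp (l * (\<Sum>i\<in>{1..m}. g (X i \<omega>)))) \<in> borel_measurable M"
  proof -
    have Sm: "(\<lambda>\<omega>. \<Sum>i\<in>{1..m}. g (X i \<omega>)) \<in> borel_measurable M"
      by (rule borel_measurable_sum) (rule measurable_compose[OF Xm gm])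
    have "(\<lambda>s::real. exp (l * s)) \<in> borel_measurable borel" by measurable
    from measurable_compose[OF Sm this] show ?thesis by simp
  qed
  have intM: "integrable M (\<lambda>\<omega>. \<phi> (\<lambda>i\<in>{1..m}. X i \<omega>))"
    unfolding lhs by (rule integrable_const_bound[where B="exp (real m)"]) (use lsum lhsm in auto)
  have "(\<integral>\<omega>. \<phi> (\<lambda>i\<in>{1..m}. X i \<omega>) \<partial>M) \<le> (\<integral>x. \<phi> x \<partial>(PiM {1..m} (\<lambda>i. distr M borel (X i))))"
    using nsd[unfolded NSD_def, rule_format, of \<phi>] superadd_exp_sum[OF g, of m l] phim intM intP PiEq
    unfolding \<phi>_def by simp
  also have "\<dots> = (\<integral>x. (\<Prod>i\<in>{1..m}. exp (l * g (x i))) \<partial>(PiM {1..m} MM))"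
    unfolding PiEq \<phi>_def by (simp add: sum_distrib_left exp_sum)
  also have "\<dots> = (\<Prod>i\<in>{1..m}. \<integral>x. exp (l * g x) \<partial>MM i)"
  proof (rule PS.product_integral_prod[where f="\<lambda>i x. exp (l * g x)"])
    fix i assume i: "i \<in> {1..m}"
    interpret Mi: prob_space "MM i" by (rule MMp)
    show "integrable (MM i) (\<lambda>x. exp (l * g x))"
      by (rule Mi.integrable_const_bound[where B="exp 1"]) (use lg in \<open>auto simp: MM_def\<close>)
  qed simp
  also have "\<dots> = (\<Prod>i\<in>{1..m}. \<integral>\<omega>. exp (l * g (X i \<omega>)) \<partial>M)"
    by (rule prod.cong) (auto simp: MM_def integral_distr Xm)
  finally show ?thesis unfolding lhs .
qed

lemma exp_le_quad:
  fixes u :: real assumes "u \<le> 1" shows "exp u \<le> 1 + u + u\<^sup>2"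
proof (cases "0 \<le> u")
  case True then show ?thesis using exp_bound[OF True assms] by simp
next
  case False
  then have u: "u < 0" by simp
  have e1: "1 - u \<le> exp (- u)" using exp_ge_add_one_self[of "-u"] by simp
  have "exp u = 1 / exp (- u)" by (simp add: exp_minus field_simps)
  also have "\<dots> \<le> 1 / (1 - u)" using e1 u by (intro divide_left_mono) auto
  also have "\<dots> \<le> 1 + u + u\<^sup>2"
  proof -
    have "1 \<le> (1 - u) * (1 + u + u\<^sup>2)"
    proof -
      have "(1 - u) * (1 + u + u\<^sup>2) = 1 - u * u\<^sup>2" by (simp add: algebra_simps power2_eq_square)
      moreover have "u * u\<^sup>2 \<le> 0" using u by (simp add: mult_nonpos_nonneg)
      ultimately show ?thesis by simp
    qed
    then show ?thesis using u by (simp add: divide_le_eq mult.commute)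
  qed
  finally show ?thesis .
qed

lemma mgf_single:
  fixes M :: "'a measure" and Y :: "'a \<Rightarrow> real"
  assumes P: "prob_space M" and Ym: "Y \<in> borel_measurable M" and iY: "integrable M Y"
    and iY2: "integrable M (\<lambda>\<omega>. (Y \<omega>)\<^sup>2)" and lY: "\<And>\<omega>. \<omega> \<in> space M \<Longrightarrow> l * Y \<omega> \<le> 1"
  shows "(\<integral>\<omega>. exp (l * Y \<omega>) \<partial>M) \<le> exp (l * (\<integral>\<omega>. Y \<omega> \<partial>M) + l\<^sup>2 * (\<integral>\<omega>. (Y \<omega>)\<^sup>2 \<partial>M))"
proof -
  interpret prob_space M by (rule P)
  have em: "(\<lambda>\<omega>. exp (l * Y \<omega>)) \<in> borel_measurable M" using Ym by measurable
  have ie: "integrable M (\<lambda>\<omega>. exp (l * Y \<omega>))"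
    by (rule integrable_const_bound[where B="exp 1"]) (use lY em in auto)
  have iq: "integrable M (\<lambda>\<omega>. 1 + l * Y \<omega> + l\<^sup>2 * (Y \<omega>)\<^sup>2)"
    using iY iY2 by auto
  have "(\<integral>\<omega>. exp (l * Y \<omega>) \<partial>M) \<le> (\<integral>\<omega>. 1 + l * Y \<omega> + l\<^sup>2 * (Y \<omega>)\<^sup>2 \<partial>M)"
  proof (rule integral_mono[OF ie iq])
    fix \<omega> assume "\<omega> \<in> space M"
    from exp_le_quad[OF lY[OF this]]
    show "exp (l * Y \<omega>) \<le> 1 + l * Y \<omega> + l\<^sup>2 * (Y \<omega>)\<^sup>2" by (simp add: power_mult_distrib)
  qed
  also have "\<dots> = 1 + (l * (\<integral>\<omega>. Y \<omega> \<partial>M) + l\<^sup>2 * (\<integral>\<omega>. (Y \<omega>)\<^sup>2 \<partial>M))"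
    using iY iY2 by (simp add: prob_space)
  also have "\<dots> \<le> exp (l * (\<integral>\<omega>. Y \<omega> \<partial>M) + l\<^sup>2 * (\<integral>\<omega>. (Y \<omega>)\<^sup>2 \<partial>M))"
    by (rule exp_ge_add_one_self)
  finally show ?thesis .
qed

lemma nsd_tail:
  fixes M :: "'a measure" and X :: "nat \<Rightarrow> 'a \<Rightarrow> real" and g :: "real \<Rightarrow> real"
  assumes P: "prob_space M" and nsd: "NSD M m X"
    and Xm: "\<And>i. i \<in> {1..m} \<Longrightarrow> X i \<in> borel_measurable M"
    and g: "mono g" and gm: "g \<in> borel_measurable borel" and lg: "\<And>x. l * g x \<le> 1"
    and i1: "\<And>i. i \<in> {1..m} \<Longrightarrow> integrable M (\<lambda>\<omega>. g (X i \<omega>))"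
    and i2: "\<And>i. i \<in> {1..m} \<Longrightarrow> integrable M (\<lambda>\<omega>. (g (X i \<omega>))\<^sup>2)"
  shows "measure M {\<omega>\<in>space M. a \<le> l * (\<Sum>i\<in>{1..m}. g (X i \<omega>))}
     \<le> exp (l * (\<Sum>i\<in>{1..m}. \<integral>\<omega>. g (X i \<omega>) \<partial>M) + l\<^sup>2 * (\<Sum>i\<in>{1..m}. \<integral>\<omega>. (g (X i \<omega>))\<^sup>2 \<partial>M) - a)"
proof -
  interpret prob_space M by (rule P)
  define S where "S \<omega> = l * (\<Sum>i\<in>{1..m}. g (X i \<omega>))" for \<omega>
  have Sm: "S \<in> borel_measurable M" unfolding S_def
    by (intro borel_measurable_times borel_measurable_const borel_measurable_sum measurable_compose[OF Xm gm]) auto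
  have em: "(\<lambda>\<omega>. exp (S \<omega>)) \<in> borel_measurable M" using Sm by measurable
  have Sb: "S \<omega> \<le> real m" for \<omega>
  proof -
    have "S \<omega> = (\<Sum>i\<in>{1..m}. l * g (X i \<omega>))" unfolding S_def by (simp add: sum_distrib_left)
    also have "\<dots> \<le> (\<Sum>i\<in>{1..m}. 1)" by (rule sum_mono) (rule lg)
    finally show ?thesis by simp
  qed
  have ie: "integrable M (\<lambda>\<omega>. exp (S \<omega>))"
    by (rule integrable_const_bound[where B="exp (real m)"]) (use Sb em in auto)
  have "{\<omega>\<in>space M. a \<le> S \<omega>} = {\<omega>\<in>space M. exp a \<le> exp (S \<omega>)}" by auto
  then have "measure M {\<omega>\<in>space M. a \<le> S \<omega>} \<le> (\<integral>\<omega>. exp (S \<omega>) \<partial>M) / exp a"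
    using integral_Markov_inequality_measure[OF ie, of "space M" "exp a"] by simp
  also have "(\<integral>\<omega>. exp (S \<omega>) \<partial>M) \<le> (\<Prod>i\<in>{1..m}. \<integral>\<omega>. exp (l * g (X i \<omega>)) \<partial>M)"
    unfolding S_def by (rule nsd_mgf[OF P nsd Xm g gm lg])
  also have "\<dots> \<le> (\<Prod>i\<in>{1..m}. exp (l * (\<integral>\<omega>. g (X i \<omega>) \<partial>M) + l\<^sup>2 * (\<integral>\<omega>. (g (X i \<omega>))\<^sup>2 \<partial>M)))"
  proof (rule prod_mono)
    fix i assume i: "i \<in> {1..m}"
    have "(\<lambda>\<omega>. g (X i \<omega>)) \<in> borel_measurable M" using Xm[OF i] gm by measurable
    then show "0 \<le> (\<integral>\<omega>. exp (l * g (X i \<omega>)) \<partial>M) \<and>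
      (\<integral>\<omega>. exp (l * g (X i \<omega>)) \<partial>M) \<le> exp (l * (\<integral>\<omega>. g (X i \<omega>) \<partial>M) + l\<^sup>2 * (\<integral>\<omega>. (g (X i \<omega>))\<^sup>2 \<partial>M))"
      using mgf_single[OF P _ i1[OF i] i2[OF i], of l] lg by auto
  qed
  also have "\<dots> = exp (l * (\<Sum>i\<in>{1..m}. \<integral>\<omega>. g (X i \<omega>) \<partial>M) + l\<^sup>2 * (\<Sum>i\<in>{1..m}. \<integral>\<omega>. (g (X i \<omega>))\<^sup>2 \<partial>M))"
    by (simp add: exp_sum[symmetric] sum.distrib sum_distrib_left)
  finally have "measure M {\<omega>\<in>space M. a \<le> S \<omega>} \<le> exp (l * (\<Sum>i\<in>{1..m}. \<integral>\<omega>. g (X i \<omega>) \<partial>M) + l\<^sup>2 * (\<Sum>i\<in>{1..m}. \<integral>\<omega>. (g (X i \<omega>))\<^sup>2 \<partial>M)) / exp a"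
    by (simp add: divide_right_mono)
  then show ?thesis unfolding S_def by (simp add: exp_diff)
qed

lemma summable_exp_powr:
  fixes s :: real assumes s: "0 < s"
  shows "summable (\<lambda>N. real N * exp (- (real N powr s)))"
proof -
  obtain k :: nat where k: "3 / s \<le> real k" using real_arch_simple by blast
  have ks: "3 \<le> s * real k" using k s by (simp add: divide_le_eq mult.commute)
  have kpos: "0 < k" using ks by (cases k) auto
  have bound: "norm (real N * exp (- (real N powr s))) \<le> real k ^ k * inverse (real N ^ 2)" if N: "N \<ge> 1" for N
  proof -
    define y where "y = real N powr s"
    have y0: "0 \<le> y" unfolding y_def by simp
    have "exp y = exp (y / real k) ^ k"
      using exp_of_nat_mult[of k "y / real k"] kpos by simp
    moreover have "y / real k \<le> exp (y / real k)"
      using exp_ge_add_one_self[of "y / real k"] by linarith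
    ultimately have "(y / real k) ^ k \<le> exp y"
      using y0 by (simp add: power_mono)
    then have e1: "y ^ k / real k ^ k \<le> exp y" by (simp add: power_divide)
    have "y ^ k = real N powr (s * real k)"
      unfolding y_def using N by (simp add: powr_realpow[symmetric] powr_powr)
    also have "\<dots> \<ge> real N powr 3" using N ks by (intro powr_mono) auto
    finally have "real N ^ 3 \<le> y ^ k" using N by (simp add: powr_realpow)
    then have e2: "real N ^ 3 / real k ^ k \<le> exp y" using e1 kpos
      by (meson divide_right_mono order_trans zero_le_power of_nat_0_le_iff)
    have Npos: "0 < real N" using N by simp
    have "real N * exp (- y) = real N / exp y" by (simp add: exp_minus field_simps)
    also have "\<dots> \<le> real N / (real N ^ 3 / real k ^ k)"
      using e2 Npos kpos by (intro divide_left_mono) auto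
    also have "\<dots> = real k ^ k * inverse (real N ^ 2)"
      using Npos by (simp add: field_simps power3_eq_cube power2_eq_square)
    finally show ?thesis unfolding y_def by simp
  qed
  have "summable (\<lambda>N. real k ^ k * inverse (real N ^ 2))"
    by (intro summable_mult inverse_power_summable) simp
  then show ?thesis by (rule summable_comparison_test'[where N=1]) (use bound in auto)
qed

lemma moment2:
  fixes M :: "'a measure" and X :: "'a \<Rightarrow> real"
  assumes P: "prob_space M" and Xm: "X \<in> borel_measurable M" and Xpos: "\<And>\<omega>. \<omega> \<in> space M \<Longrightarrow> X \<omega> > 0"
    and r: "r > 0" and N: "N > 0"
    and im: "integrable M (\<lambda>\<omega>. X \<omega> powr (2 + r))"
    and mb: "(\<integral>\<omega>. X \<omega> powr (2 + r) \<partial>M) \<le> C / N powr (2 + r)"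
  shows "integrable M (\<lambda>\<omega>. (X \<omega>)\<^sup>2) \<and> (\<integral>\<omega>. (X \<omega>)\<^sup>2 \<partial>M) \<le> (1 + C) / N\<^sup>2"
proof -
  interpret prob_space M by (rule P)
  have pw: "(X \<omega>)\<^sup>2 \<le> 1 / N\<^sup>2 + N powr r * X \<omega> powr (2 + r)" if w: "\<omega> \<in> space M" for \<omega>
  proof -
    have x0: "X \<omega> > 0" using Xpos[OF w] .
    have p2: "X \<omega> powr (2 + r) = (X \<omega>)\<^sup>2 * X \<omega> powr r"
      using x0 by (simp add: powr_add powr_numeral)
    show ?thesis
    proof (cases "X \<omega> * N \<le> 1")
      case True
      then have "X \<omega> \<le> 1 / N" using N by (simp add: field_simps)
      then have "(X \<omega>)\<^sup>2 \<le> (1 / N)\<^sup>2" using x0 by (intro power_mono) auto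
      moreover have "0 \<le> N powr r * X \<omega> powr (2 + r)" by simp
      ultimately have "(X \<omega>)\<^sup>2 \<le> 1 / N\<^sup>2" by (simp add: power_divide)
      then show ?thesis using \<open>0 \<le> N powr r * X \<omega> powr (2 + r)\<close> by linarith
    next
      case False
      then have "1 \<le> (X \<omega> * N) powr r" using r x0 N by (intro ge_one_powr_ge_zero) auto
      then have "1 \<le> N powr r * X \<omega> powr r" using x0 N by (simp add: powr_mult mult.commute)
      then have "(X \<omega>)\<^sup>2 * 1 \<le> (X \<omega>)\<^sup>2 * (N powr r * X \<omega> powr r)" by (intro mult_left_mono) auto
      also have "\<dots> = N powr r * X \<omega> powr (2 + r)" unfolding p2 by simp
      finally have "(X \<omega>)\<^sup>2 \<le> N powr r * X \<omega> powr (2 + r)" by simp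
      moreover have "0 \<le> 1 / N\<^sup>2" by simp
      ultimately show ?thesis by linarith
    qed
  qed
  have ib: "integrable M (\<lambda>\<omega>. 1 / N\<^sup>2 + N powr r * X \<omega> powr (2 + r))" using im by auto
  have i2: "integrable M (\<lambda>\<omega>. (X \<omega>)\<^sup>2)"
  proof (rule Bochner_Integration.integrable_bound[OF ib])
    show "(\<lambda>\<omega>. (X \<omega>)\<^sup>2) \<in> borel_measurable M" using Xm by measurable
    show "AE \<omega> in M. norm ((X \<omega>)\<^sup>2) \<le> norm (1 / N\<^sup>2 + N powr r * X \<omega> powr (2 + r))"
    proof (rule AE_I2)
      fix \<omega> assume w: "\<omega> \<in> space M"
      have "0 \<le> 1 / N\<^sup>2 + N powr r * X \<omega> powr (2 + r)" by simp
      then show "norm ((X \<omega>)\<^sup>2) \<le> norm (1 / N\<^sup>2 + N powr r * X \<omega> powr (2 + r))" using pw[OF w] by simp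
    qed
  qed
  have "(\<integral>\<omega>. (X \<omega>)\<^sup>2 \<partial>M) \<le> (\<integral>\<omega>. 1 / N\<^sup>2 + N powr r * X \<omega> powr (2 + r) \<partial>M)"
    by (rule integral_mono[OF i2 ib pw])
  also have "\<dots> = 1 / N\<^sup>2 + N powr r * (\<integral>\<omega>. X \<omega> powr (2 + r) \<partial>M)"
    using im by (simp add: prob_space)
  also have "\<dots> \<le> 1 / N\<^sup>2 + N powr r * (C / N powr (2 + r))"
    using mb by (intro add_left_mono mult_left_mono) auto
  also have "N powr r * (C / N powr (2 + r)) = C / N\<^sup>2"
  proof -
    have "N powr (2 + r) = N\<^sup>2 * N powr r" using N by (simp add: powr_add powr_numeral)
    then show ?thesis using N by (simp add: field_simps)
  qed
  finally show ?thesis using i2 by (simp add: add_divide_distrib)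
qed

lemma tailT:
  fixes M :: "'a measure" and X :: "'a \<Rightarrow> real"
  assumes P: "prob_space M" and Xm: "X \<in> borel_measurable M" and Xpos: "\<And>\<omega>. \<omega> \<in> space M \<Longrightarrow> X \<omega> > 0"
    and r: "r > 0" and c: "c > 0"
    and im: "integrable M (\<lambda>\<omega>. X \<omega> powr (2 + r))"
    and mb: "(\<integral>\<omega>. X \<omega> powr (2 + r) \<partial>M) \<le> B"
  shows "measure M {\<omega>\<in>space M. c < X \<omega>} \<le> B / c powr (2 + r)"
proof -
  interpret prob_space M by (rule P)
  have "{\<omega>\<in>space M. c < X \<omega>} \<subseteq> {\<omega>\<in>space M. c powr (2 + r) \<le> X \<omega> powr (2 + r)}"
    using c r by (auto intro!: powr_mono2)
  then have "measure M {\<omega>\<in>space M. c < X \<omega>} \<le> measure M {\<omega>\<in>space M. c powr (2 + r) \<le> X \<omega> powr (2 + r)}"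
    using Xm by (intro finite_measure_mono) measurable
  also have "\<dots> \<le> (\<integral>\<omega>. X \<omega> powr (2 + r) \<partial>M) / c powr (2 + r)"
    using c by (intro integral_Markov_inequality_measure[OF im, of "space M"]) auto
  also have "\<dots> \<le> B / c powr (2 + r)" using mb c by (intro divide_right_mono) auto
  finally show ?thesis .
qed



theorem theorem2p1:
  fixes M :: "'a measure"
    and t :: "nat \<Rightarrow> nat \<Rightarrow> 'a \<Rightarrow> real"
    and W :: "real \<Rightarrow> 'a \<Rightarrow> real"
    and a r C :: real
  assumes "prob_space M"
    and meas: "\<And>N j. N \<ge> 1 \<Longrightarrow> j \<ge> 1 \<Longrightarrow> t N j \<in> borel_measurable M"
    and pos: "\<And>N j \<omega>. N \<ge> 1 \<Longrightarrow> j \<ge> 1 \<Longrightarrow> \<omega> \<in> space M \<Longrightarrow> t N j \<omega> > 0"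
    and int: "\<And>N j. N \<ge> 1 \<Longrightarrow> j \<ge> 1 \<Longrightarrow> integrable M (t N j)"
    and mean: "\<And>N j. N \<ge> 1 \<Longrightarrow> j \<ge> 1 \<Longrightarrow> (\<integral>\<omega>. t N j \<omega> \<partial>M) = 1 / real N"
    and r_pos: "r > 0" and C_pos: "C > 0"
    and mom_int: "\<And>N j. N \<ge> 1 \<Longrightarrow> j \<ge> 1 \<Longrightarrow> integrable M (\<lambda>\<omega>. t N j \<omega> powr (2 + r))"
    and mom: "\<And>N j. N \<ge> 1 \<Longrightarrow> j \<ge> 1 \<Longrightarrow>
                (\<integral>\<omega>. t N j \<omega> powr (2 + r) \<partial>M) \<le> C / real N powr (2 + r)"
    and nsd: "\<And>N m. N \<ge> 1 \<Longrightarrow> NSD M m (t N)"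
    and W_meas: "\<And>s. s \<ge> 0 \<Longrightarrow> W s \<in> borel_measurable M"
    and W_cont: "AE \<omega> in M. continuous_on {0..} (\<lambda>s. W s \<omega>)"
  shows "AE \<omega> in M.
    (\<lambda>N. let \<tau> = (\<lambda>i. \<Sum>j\<in>{1..i}. t N j \<omega>);
             n = card {j. j \<ge> 1 \<and> \<tau> j \<le> 1};
             Y = (\<lambda>i. a * \<tau> i + (W (\<tau> i) \<omega> - W (\<tau> (i - 1)) \<omega>));
             ahat = (\<Sum>i\<in>{1..n}. Y i * \<tau> i) / (\<Sum>i\<in>{1..n}. (\<tau> i)\<^sup>2)
         in real n * (ahat - a))
    \<longlonglongrightarrow> 3 * integral {0..1} (\<lambda>s. W 1 \<omega> - W s \<omega>)"
proof -
  have P: "prob_space M" by fact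
  interpret prob_space M by (rule P)
  define s where "s = r / (4 * (2 + r))"
  have s0: "0 < s" using r_pos by (simp add: s_def)
  have s4: "4 * s \<le> 1" using r_pos by (simp add: s_def field_simps)
  have sr: "2 * s * (2 + r) = r / 2" using r_pos by (simp add: s_def field_simps)
  define K where "K = 1 + C"
  define c where "c N = real N powr (- (2 * s))" for N :: nat
  define l where "l N = real N powr (2 * s)" for N :: nat
  define \<epsilon> where "\<epsilon> N = real N powr (- s)" for N :: nat
  define T where "T N j = {\<omega>\<in>space M. c N < t N j \<omega>}" for N j
  define U where "U N m = {\<omega>\<in>space M. l N * (real m / real N + \<epsilon> N) \<le> l N * (\<Sum>j\<in>{1..m}. min (max (t N j \<omega>) 0) (c N))}" for N m
  define L where "L N m = {\<omega>\<in>space M. - l N * (real m / real N - \<epsilon> N) \<le> - l N * (\<Sum>j\<in>{1..m}. max (t N j \<omega>) 0)}" for N m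
  define Bad where "Bad N = (if N = 0 then {} else (\<Union>j\<in>{1..2*N}. T N j) \<union> (\<Union>m\<in>{1..2*N}. U N m) \<union> (\<Union>m\<in>{1..2*N}. L N m))" for N
  have cpos: "c N > 0" "l N > 0" "\<epsilon> N > 0" if "N \<ge> 1" for N
    using that by (auto simp: c_def l_def \<epsilon>_def)
  have lc: "l N * c N = 1" if "N \<ge> 1" for N
    using that by (simp add: c_def l_def powr_add[symmetric])
  have le: "l N * \<epsilon> N = real N powr s" if "N \<ge> 1" for N
    using that by (simp add: \<epsilon>_def l_def powr_add[symmetric])
  have ce: "c N \<le> \<epsilon> N" if "N \<ge> 1" for N
    using that s0 unfolding c_def \<epsilon>_def by (intro powr_mono) auto
  have sumM: "(\<lambda>\<omega>. \<Sum>j\<in>{1..m}. f (t N j \<omega>)) \<in> borel_measurable M"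
    if "N \<ge> 1" "f \<in> borel_measurable borel" for N m and f :: "real \<Rightarrow> real"
  proof (rule borel_measurable_sum)
    fix j assume "j \<in> {1..m}"
    then have "j \<ge> 1" by simp
    from measurable_compose[OF meas[OF that(1) this] that(2)]
    show "(\<lambda>\<omega>. f (t N j \<omega>)) \<in> borel_measurable M" .
  qed
  have Tm: "T N j \<in> sets M" if "N \<ge> 1" "j \<ge> 1" for N j
  proof -
    note meas[OF that, measurable]
    show ?thesis unfolding T_def by measurable
  qed
  have Um: "U N m \<in> sets M" if "N \<ge> 1" for N m
  proof -
    have [measurable]: "(\<lambda>\<omega>. \<Sum>j\<in>{1..m}. min (max (t N j \<omega>) 0) (c N)) \<in> borel_measurable M"
      by (rule sumM[OF that]) measurable
    show ?thesis unfolding U_def by measurable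
  qed
  have Lm: "L N m \<in> sets M" if "N \<ge> 1" for N m
  proof -
    have [measurable]: "(\<lambda>\<omega>. \<Sum>j\<in>{1..m}. max (t N j \<omega>) 0) \<in> borel_measurable M"
      by (rule sumM[OF that]) measurable
    show ?thesis unfolding L_def by measurable
  qed
  have Badm: "Bad N \<in> sets M" for N
    unfolding Bad_def using Tm Um Lm by auto
  have K0: "0 \<le> K" using C_pos by (simp add: K_def)
  have M2: "integrable M (\<lambda>\<omega>. (t N j \<omega>)\<^sup>2) \<and> (\<integral>\<omega>. (t N j \<omega>)\<^sup>2 \<partial>M) \<le> K / (real N)\<^sup>2"
    if "N \<ge> 1" "j \<ge> 1" for N j
    using moment2[OF P meas[OF that] pos[OF that] r_pos _ mom_int[OF that] mom[OF that]] that
    unfolding K_def by simp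
  have PT: "measure M (T N j) \<le> C * real N powr (-2 - r/2)" if "N \<ge> 1" "j \<ge> 1" for N j
  proof -
    have "measure M (T N j) \<le> (C / real N powr (2 + r)) / c N powr (2 + r)"
      unfolding T_def by (rule tailT[OF P meas[OF that] pos[OF that] r_pos cpos(1)[OF that(1)] mom_int[OF that] mom[OF that]])
    also have "c N powr (2 + r) = real N powr (- (r / 2))"
    proof -
      have "- (2 * s) * (2 + r) = - (r / 2)" by (simp only: mult_minus_left sr)
      then show ?thesis unfolding c_def powr_powr by (simp only:)
    qed
    also have "(C / real N powr (2 + r)) / real N powr (- (r / 2)) = C * real N powr (-2 - r/2)"
    proof -
      have "real N powr (2 + r) * real N powr (- (r / 2)) * real N powr (-2 - r/2) = real N powr 0"
        unfolding powr_add[symmetric] by simp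
      then have "real N powr (2 + r) * real N powr (- (r / 2)) * real N powr (-2 - r/2) = 1"
        using that by simp
      then show ?thesis using that by (simp add: field_simps)
    qed
    finally show ?thesis .
  qed
  have l2: "(l N)\<^sup>2 = real N powr (4 * s)" if "N \<ge> 1" for N
    unfolding l_def power2_eq_square powr_add[symmetric] by simp
  have expo: "(l N)\<^sup>2 * (real m * (K / (real N)\<^sup>2)) \<le> 2 * K" if "N \<ge> 1" "m \<le> 2 * N" for N m
  proof -
    have "real N powr (4 * s) \<le> real N powr 1" using that s4 by (intro powr_mono) auto
    then have a: "(l N)\<^sup>2 \<le> real N" using l2[OF that(1)] that by simp
    have b: "real m * (K / (real N)\<^sup>2) \<le> 2 * real N * (K / (real N)\<^sup>2)"
      using that K0 by (intro mult_right_mono) auto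
    have "(l N)\<^sup>2 * (real m * (K / (real N)\<^sup>2)) \<le> real N * (2 * real N * (K / (real N)\<^sup>2))"
      using a b K0 by (rule_tac mult_mono) auto
    also have "\<dots> = 2 * K" using that by (simp add: power2_eq_square)
    finally show ?thesis .
  qed
  have EU: "integrable M (\<lambda>\<omega>. min (max (t N j \<omega>) 0) (c N)) \<and>
             integrable M (\<lambda>\<omega>. (min (max (t N j \<omega>) 0) (c N))\<^sup>2) \<and>
             (\<integral>\<omega>. min (max (t N j \<omega>) 0) (c N) \<partial>M) \<le> 1 / real N \<and>
             (\<integral>\<omega>. (min (max (t N j \<omega>) 0) (c N))\<^sup>2 \<partial>M) \<le> K / (real N)\<^sup>2"
    if "N \<ge> 1" "j \<ge> 1" for N j
  proof -
    note tm = meas[OF that]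
    have bnd: "0 \<le> min (max (t N j \<omega>) 0) (c N) \<and> min (max (t N j \<omega>) 0) (c N) \<le> t N j \<omega>"
      if "\<omega> \<in> space M" for \<omega>
      using pos[OF \<open>N \<ge> 1\<close> \<open>j \<ge> 1\<close> that] cpos(1)[OF \<open>N \<ge> 1\<close>] by auto
    have gm: "(\<lambda>\<omega>. min (max (t N j \<omega>) 0) (c N)) \<in> borel_measurable M" using tm by measurable
    have gm2: "(\<lambda>\<omega>. (min (max (t N j \<omega>) 0) (c N))\<^sup>2) \<in> borel_measurable M" using tm by measurable
    have i1: "integrable M (\<lambda>\<omega>. min (max (t N j \<omega>) 0) (c N))"
      by (rule Bochner_Integration.integrable_bound[OF int[OF that] gm]) (use bnd in \<open>auto intro!: AE_I2\<close>)
    have sq: "(min (max (t N j \<omega>) 0) (c N))\<^sup>2 \<le> (t N j \<omega>)\<^sup>2" if "\<omega> \<in> space M" for \<omega>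
      using bnd[OF that] by (intro power_mono) auto
    have i2: "integrable M (\<lambda>\<omega>. (min (max (t N j \<omega>) 0) (c N))\<^sup>2)"
      by (rule Bochner_Integration.integrable_bound[OF conjunct1[OF M2[OF that]] gm2]) (use sq in \<open>auto intro!: AE_I2\<close>)
    have e1: "(\<integral>\<omega>. min (max (t N j \<omega>) 0) (c N) \<partial>M) \<le> 1 / real N"
      using integral_mono[OF i1 int[OF that]] bnd mean[OF that] by auto
    have e2: "(\<integral>\<omega>. (min (max (t N j \<omega>) 0) (c N))\<^sup>2 \<partial>M) \<le> K / (real N)\<^sup>2"
      using integral_mono[OF i2 conjunct1[OF M2[OF that]]] sq conjunct2[OF M2[OF that]] by force
    show ?thesis using i1 i2 e1 e2 by blast
  qed
  have monoU: "mono (\<lambda>x::real. min (max x 0) (c N))" for N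
    by (rule monoI) (auto simp: min_def max_def)
  have monoL: "mono (\<lambda>x::real. max x 0)"
    by (rule monoI) (auto simp: max_def)
  have PU: "measure M (U N m) \<le> exp (2 * K - real N powr s)" if "N \<ge> 1" "m \<le> 2 * N" for N m
  proof -
    have gm: "(\<lambda>x::real. min (max x 0) (c N)) \<in> borel_measurable borel" by measurable
    have lg: "l N * min (max x 0) (c N) \<le> 1" for x
    proof -
      have "l N * min (max x 0) (c N) \<le> l N * c N" using cpos[OF that(1)] by (intro mult_left_mono) auto
      then show ?thesis using lc[OF that(1)] by simp
    qed
    have "measure M (U N m) \<le> exp (l N * (\<Sum>i\<in>{1..m}. \<integral>\<omega>. min (max (t N i \<omega>) 0) (c N) \<partial>M)
        + (l N)\<^sup>2 * (\<Sum>i\<in>{1..m}. \<integral>\<omega>. (min (max (t N i \<omega>) 0) (c N))\<^sup>2 \<partial>M) - l N * (real m / real N + \<epsilon> N))"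
      unfolding U_def
      by (rule nsd_tail[OF P nsd[OF that(1)] meas[OF that(1)] monoU gm lg]) (use EU that in auto)
    also have "\<dots> \<le> exp (2 * K - real N powr s)"
    proof -
      have s1: "(\<Sum>i\<in>{1..m}. \<integral>\<omega>. min (max (t N i \<omega>) 0) (c N) \<partial>M) \<le> real m * (1 / real N)"
        using sum_mono[of "{1..m}" "\<lambda>i. \<integral>\<omega>. min (max (t N i \<omega>) 0) (c N) \<partial>M" "\<lambda>_. 1 / real N"] EU that by auto
      have s2: "(\<Sum>i\<in>{1..m}. \<integral>\<omega>. (min (max (t N i \<omega>) 0) (c N))\<^sup>2 \<partial>M) \<le> real m * (K / (real N)\<^sup>2)"
        using sum_mono[of "{1..m}" "\<lambda>i. \<integral>\<omega>. (min (max (t N i \<omega>) 0) (c N))\<^sup>2 \<partial>M" "\<lambda>_. K / (real N)\<^sup>2"] EU that by auto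
      have a1: "l N * (\<Sum>i\<in>{1..m}. \<integral>\<omega>. min (max (t N i \<omega>) 0) (c N) \<partial>M) \<le> l N * (real m * (1 / real N))"
        using s1 cpos[OF that(1)] by (intro mult_left_mono) auto
      have a2: "(l N)\<^sup>2 * (\<Sum>i\<in>{1..m}. \<integral>\<omega>. (min (max (t N i \<omega>) 0) (c N))\<^sup>2 \<partial>M) \<le> (l N)\<^sup>2 * (real m * (K / (real N)\<^sup>2))"
        using s2 by (intro mult_left_mono) auto
      have a3: "l N * (real m / real N + \<epsilon> N) = l N * (real m * (1 / real N)) + real N powr s"
        using le[OF that(1)] by (simp add: algebra_simps)
      show ?thesis using a1 a2 a3 expo[OF that] by simp
    qed
    finally show ?thesis .
  qed
  have EL: "integrable M (\<lambda>\<omega>. max (t N j \<omega>) 0) \<and>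
             integrable M (\<lambda>\<omega>. (max (t N j \<omega>) 0)\<^sup>2) \<and>
             (\<integral>\<omega>. max (t N j \<omega>) 0 \<partial>M) = 1 / real N \<and>
             (\<integral>\<omega>. (max (t N j \<omega>) 0)\<^sup>2 \<partial>M) \<le> K / (real N)\<^sup>2"
    if "N \<ge> 1" "j \<ge> 1" for N j
  proof -
    have eq: "max (t N j \<omega>) 0 = t N j \<omega>" if "\<omega> \<in> space M" for \<omega>
      using pos[OF \<open>N \<ge> 1\<close> \<open>j \<ge> 1\<close> that] by simp
    have i1: "integrable M (\<lambda>\<omega>. max (t N j \<omega>) 0)"
      using int[OF that] by (subst Bochner_Integration.integrable_cong[OF refl eq]) auto
    have i2: "integrable M (\<lambda>\<omega>. (max (t N j \<omega>) 0)\<^sup>2)"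
      using conjunct1[OF M2[OF that]] by (subst Bochner_Integration.integrable_cong[OF refl, of _ _ "\<lambda>\<omega>. (t N j \<omega>)\<^sup>2"]) (auto simp: eq)
    have e1: "(\<integral>\<omega>. max (t N j \<omega>) 0 \<partial>M) = 1 / real N"
      using mean[OF that] by (subst Bochner_Integration.integral_cong[OF refl eq]) auto
    have e2: "(\<integral>\<omega>. (max (t N j \<omega>) 0)\<^sup>2 \<partial>M) = (\<integral>\<omega>. (t N j \<omega>)\<^sup>2 \<partial>M)"
      by (rule Bochner_Integration.integral_cong) (auto simp: eq)
    show ?thesis using i1 i2 e1 e2 conjunct2[OF M2[OF that]] by simp
  qed
  have PL: "measure M (L N m) \<le> exp (2 * K - real N powr s)" if "N \<ge> 1" "m \<le> 2 * N" for N m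
  proof -
    have gm: "(\<lambda>x::real. max x 0) \<in> borel_measurable borel" by measurable
    have lg: "- l N * max x 0 \<le> 1" for x
    proof -
      have "0 \<le> l N * max x 0" using cpos[OF that(1)] by simp
      then show ?thesis by simp
    qed
    have "measure M (L N m) \<le> exp (- l N * (\<Sum>i\<in>{1..m}. \<integral>\<omega>. max (t N i \<omega>) 0 \<partial>M)
        + (- l N)\<^sup>2 * (\<Sum>i\<in>{1..m}. \<integral>\<omega>. (max (t N i \<omega>) 0)\<^sup>2 \<partial>M) - - l N * (real m / real N - \<epsilon> N))"
      unfolding L_def
      by (rule nsd_tail[OF P nsd[OF that(1)] meas[OF that(1)] monoL gm lg]) (use EL that in auto)
    also have "\<dots> \<le> exp (2 * K - real N powr s)"
    proof -
      have s1: "(\<Sum>i\<in>{1..m}. \<integral>\<omega>. max (t N i \<omega>) 0 \<partial>M) = real m * (1 / real N)"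
        using sum.cong[of "{1..m}" "{1..m}" "\<lambda>i. \<integral>\<omega>. max (t N i \<omega>) 0 \<partial>M" "\<lambda>_. 1 / real N"] EL that by auto
      have s2: "(\<Sum>i\<in>{1..m}. \<integral>\<omega>. (max (t N i \<omega>) 0)\<^sup>2 \<partial>M) \<le> real m * (K / (real N)\<^sup>2)"
        using sum_mono[of "{1..m}" "\<lambda>i. \<integral>\<omega>. (max (t N i \<omega>) 0)\<^sup>2 \<partial>M" "\<lambda>_. K / (real N)\<^sup>2"] EL that by auto
      have a2: "(- l N)\<^sup>2 * (\<Sum>i\<in>{1..m}. \<integral>\<omega>. (max (t N i \<omega>) 0)\<^sup>2 \<partial>M) \<le> (l N)\<^sup>2 * (real m * (K / (real N)\<^sup>2))"
      proof -
        have "(- l N)\<^sup>2 = (l N)\<^sup>2" by simp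
        then show ?thesis using s2 by (simp only:) (rule mult_left_mono, auto)
      qed
      have a3: "- l N * (real m * (1 / real N)) - - l N * (real m / real N - \<epsilon> N) = - (real N powr s)"
        using le[OF that(1)] by (simp add: algebra_simps)
      show ?thesis unfolding s1 using a2 a3 expo[OF that] by simp
    qed
    finally show ?thesis .
  qed
  have PB: "measure M (Bad N) \<le> 2 * C * real N powr (-1 - r/2) + 4 * exp (2 * K) * (real N * exp (- (real N powr s)))"
    if N1: "N \<ge> 1" for N
  proof -
    have N0: "N \<noteq> 0" using N1 by simp
    let ?A = "\<Union>j\<in>{1..2*N}. T N j" and ?B = "\<Union>m\<in>{1..2*N}. U N m" and ?C = "\<Union>m\<in>{1..2*N}. L N m"
    have sA: "?A \<in> sets M" using Tm N1 by auto
    have sB: "?B \<in> sets M" using Um N1 by auto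
    have sC: "?C \<in> sets M" using Lm N1 by auto
    have mA: "measure M ?A \<le> real (2 * N) * (C * real N powr (-2 - r/2))"
    proof -
      have "measure M ?A \<le> (\<Sum>j\<in>{1..2*N}. measure M (T N j))" by (rule measure_UNION_le) (use Tm N1 in auto)
      also have "\<dots> \<le> (\<Sum>j\<in>{1..2*N}. C * real N powr (-2 - r/2))" by (rule sum_mono) (use PT N1 in auto)
      finally show ?thesis by simp
    qed
    have mB: "measure M ?B \<le> real (2 * N) * exp (2 * K - real N powr s)"
    proof -
      have "measure M ?B \<le> (\<Sum>m\<in>{1..2*N}. measure M (U N m))" by (rule measure_UNION_le) (use Um N1 in auto)
      also have "\<dots> \<le> (\<Sum>m\<in>{1..2*N}. exp (2 * K - real N powr s))" by (rule sum_mono) (use PU N1 in auto)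
      finally show ?thesis by simp
    qed
    have mC: "measure M ?C \<le> real (2 * N) * exp (2 * K - real N powr s)"
    proof -
      have "measure M ?C \<le> (\<Sum>m\<in>{1..2*N}. measure M (L N m))" by (rule measure_UNION_le) (use Lm N1 in auto)
      also have "\<dots> \<le> (\<Sum>m\<in>{1..2*N}. exp (2 * K - real N powr s))" by (rule sum_mono) (use PL N1 in auto)
      finally show ?thesis by simp
    qed
    have "measure M (Bad N) \<le> measure M (?A \<union> ?B) + measure M ?C"
      unfolding Bad_def using N0 sA sB sC by (simp add: measure_Un_le)
    also have "measure M (?A \<union> ?B) \<le> measure M ?A + measure M ?B" using sA sB by (rule measure_Un_le)
    finally have mBad: "measure M (Bad N) \<le> measure M ?A + measure M ?B + measure M ?C" by simp
    have eA: "real (2 * N) * (C * real N powr (-2 - r/2)) = 2 * C * real N powr (-1 - r/2)"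
    proof -
      have "real N * real N powr (-2 - r/2) = real N powr 1 * real N powr (-2 - r/2)" using N1 by simp
      also have "\<dots> = real N powr (-1 - r/2)" unfolding powr_add[symmetric] by simp
      finally show ?thesis by simp
    qed
    have eB: "real (2 * N) * exp (2 * K - real N powr s) + real (2 * N) * exp (2 * K - real N powr s)
        = 4 * exp (2 * K) * (real N * exp (- (real N powr s)))"
      by (simp add: exp_diff exp_minus field_simps)
    show ?thesis using mBad mA mB mC eA eB by linarith
  qed
  have summB: "summable (\<lambda>N. 2 * C * real N powr (-1 - r/2) + 4 * exp (2 * K) * (real N * exp (- (real N powr s))))"
  proof (rule summable_add)
    show "summable (\<lambda>N. 2 * C * real N powr (-1 - r/2))"
      using r_pos by (intro summable_mult) (simp add: summable_real_powr_iff)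
    show "summable (\<lambda>N. 4 * exp (2 * K) * (real N * exp (- (real N powr s))))"
      by (intro summable_mult summable_exp_powr s0)
  qed
  have summBad: "summable (\<lambda>N. measure M (Bad N))"
    by (rule summable_comparison_test'[OF summB, where N=1]) (use PB in auto)
  have BC: "AE \<omega> in M. eventually (\<lambda>N. \<omega> \<in> space M - Bad N) sequentially"
    by (rule borel_cantelli_AE1[OF Badm _ summBad]) (simp add: less_top[symmetric])
  have \<delta>0: "\<epsilon> \<longlonglongrightarrow> 0"
    unfolding \<epsilon>_def using tendsto_neg_powr[OF _ filterlim_real_sequentially, of "-s"] s0 by simp
  show ?thesis
    using BC W_cont AE_space
  proof eventually_elim
    case (elim \<omega>)
    then have ev0: "eventually (\<lambda>N. \<omega> \<in> space M - Bad N) sequentially"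
      and wc: "continuous_on {0..} (\<lambda>s. W s \<omega>)" and om: "\<omega> \<in> space M" by auto
    have ev: "eventually (\<lambda>N. (\<forall>j\<in>{1..2*N}. t N j \<omega> \<le> \<epsilon> N) \<and>
              (\<forall>m\<in>{1..2*N}. \<bar>(\<Sum>j\<in>{1..m}. t N j \<omega>) - real m / real N\<bar> < \<epsilon> N)) sequentially"
      using ev0 eventually_ge_at_top[of 1]
    proof eventually_elim
      case (elim N)
      then have nb: "\<omega> \<notin> Bad N" and N1: "N \<ge> 1" by auto
      have nT: "t N j \<omega> \<le> c N" if "j \<in> {1..2*N}" for j
      proof -
        have "\<omega> \<notin> T N j" using nb that N1 unfolding Bad_def by auto
        then show ?thesis using om unfolding T_def by auto
      qed
      have nU: "\<omega> \<notin> U N m" if "m \<in> {1..2*N}" for m using nb that N1 unfolding Bad_def by auto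
      have nL: "\<omega> \<notin> L N m" if "m \<in> {1..2*N}" for m using nb that N1 unfolding Bad_def by auto
      show ?case
      proof (intro conjI ballI)
        fix j assume "j \<in> {1..2*N}"
        then show "t N j \<omega> \<le> \<epsilon> N" using nT ce[OF N1] by (meson order_trans)
      next
        fix m assume m: "m \<in> {1..2*N}"
        have eqs: "(\<Sum>j\<in>{1..m}. min (max (t N j \<omega>) 0) (c N)) = (\<Sum>j\<in>{1..m}. t N j \<omega>)"
        proof (rule sum.cong)
          fix j assume j: "j \<in> {1..m}"
          then have "j \<in> {1..2*N}" using m by auto
          then have "t N j \<omega> \<le> c N" by (rule nT)
          moreover have "t N j \<omega> > 0" using pos[OF N1 _ om, of j] j by auto
          ultimately show "min (max (t N j \<omega>) 0) (c N) = t N j \<omega>" by simp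
        qed simp
        have eql: "(\<Sum>j\<in>{1..m}. max (t N j \<omega>) 0) = (\<Sum>j\<in>{1..m}. t N j \<omega>)"
        proof (rule sum.cong)
          fix j assume j: "j \<in> {1..m}"
          have "t N j \<omega> > 0" using pos[OF N1 _ om, of j] j by auto
          then show "max (t N j \<omega>) 0 = t N j \<omega>" by simp
        qed simp
        have lp: "l N > 0" using cpos(2)[OF N1] .
        have "\<not> (l N * (real m / real N + \<epsilon> N) \<le> l N * (\<Sum>j\<in>{1..m}. t N j \<omega>))"
          using nU[OF m] om eqs unfolding U_def by simp
        then have u: "(\<Sum>j\<in>{1..m}. t N j \<omega>) < real m / real N + \<epsilon> N"
          using lp by (simp add: mult_le_cancel_left_pos)
        have "\<not> (- l N * (real m / real N - \<epsilon> N) \<le> - l N * (\<Sum>j\<in>{1..m}. t N j \<omega>))"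
          using nL[OF m] om eql unfolding L_def by simp
        then have v: "real m / real N - \<epsilon> N < (\<Sum>j\<in>{1..m}. t N j \<omega>)"
          using lp by (simp add: mult_le_cancel_left_pos)
        show "\<bar>(\<Sum>j\<in>{1..m}. t N j \<omega>) - real m / real N\<bar> < \<epsilon> N" using u v by (simp add: abs_less_iff)
      qed
    qed
    have posw: "\<And>N j. N \<ge> 1 \<Longrightarrow> j \<ge> 1 \<Longrightarrow> t N j \<omega> > 0" using pos om by blast
    show ?case
      using det_limit[where tt="\<lambda>N j. t N j \<omega>" and w="\<lambda>s. W s \<omega>" and \<delta>=\<epsilon> and a=a, OF posw wc \<delta>0 ev] .
  qed
qed


end
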